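(* Let $\alpha\ge0$ and $n\ge2$ with $n\ge\alpha$, and let $K$ be the event that $\mathscr{G}(n,\alpha/n)$ is connected. Then \[ P_{n,\alpha}(K)\ge\frac1n\Bigl(1-\bigl(1-\tfrac{\alpha}{n}\bigr)^{n-1}\Bigr)^{n-1}. \]
   Context: $\mathscr{G}(n,p)$ is the random graph on vertex set $\{1,\dots,n\}$ in which each of the $\binom n2$ unordered pairs is an edge independently with probability $p$; here $p=\alpha/n$, and $P_{n,\alpha}$ is the corresponding probability measure. *)

theory Defs
  imports Complex_Main
begin

definition all_pairs :: "nat \<Rightarrow> nat set set" where
  "all_pairs n = {e. e \<subseteq> {1..n} \<and> card e = 2}"

definition edge_rel :: "nat set set \<Rightarrow> (nat \<times> nat) set" where
  "edge_rel E = {(u, v). {u, v} \<in> E}"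

definition graph_connected :: "nat \<Rightarrow> nat set set \<Rightarrow> bool" where
  "graph_connected n E \<longleftrightarrow> (\<forall>u\<in>{1..n}. \<forall>v\<in>{1..n}. (u, v) \<in> (edge_rel E)\<^sup>*)"

text \<open>Probability P_{n,p}(Q) in G(n,p): each of the binom(n,2) pairs is an edge
  independently with probability p, so an edge set E has probability
  p^|E| (1-p)^(binom(n,2)-|E|).\<close>
definition gnp_prob :: "nat \<Rightarrow> real \<Rightarrow> (nat set set \<Rightarrow> bool) \<Rightarrow> real" where
  "gnp_prob n p Q = (\<Sum>E\<in>{E. E \<subseteq> all_pairs n \<and> Q E}.
      p ^ card E * (1 - p) ^ (card (all_pairs n) - card E))"

end

theory Submission imports Defs begin

definition Wt :: "real \<Rightarrow> real \<Rightarrow> 'a set \<Rightarrow> ('a set \<Rightarrow> real) \<Rightarrow> real" where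
  "Wt x y U F = (\<Sum>J\<in>Pow U. x ^ card J * y ^ (card U - card J) * F J)"

lemma Wt_empty[simp]: "Wt x y {} F = F {}"
  by (simp add: Wt_def)

lemma Wt_insert:
  assumes "finite U" "u \<notin> U"
  shows "Wt x y (insert u U) F = x * Wt x y U (\<lambda>J. F (insert u J)) + y * Wt x y U F"
proof -
  have d: "Pow U \<inter> insert u ` Pow U = {}" using assms by auto
  have inj: "inj_on (insert u) (Pow U)" unfolding inj_on_def by (metis Diff_insert_absorb PowD in_mono assms(2))
  have fin: "finite (Pow U)" using assms by simp
  have "Wt x y (insert u U) F = (\<Sum>J\<in>Pow U. x ^ card J * y ^ (card (insert u U) - card J) * F J)
      + (\<Sum>J\<in>insert u ` Pow U. x ^ card J * y ^ (card (insert u U) - card J) * F J)"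
    unfolding Wt_def Pow_insert using d fin by (simp add: sum.union_disjoint)
  also have "(\<Sum>J\<in>Pow U. x ^ card J * y ^ (card (insert u U) - card J) * F J)
      = y * Wt x y U F"
    unfolding Wt_def sum_distrib_left
  proof (rule sum.cong)
    fix J assume "J \<in> Pow U"
    then have "card J \<le> card U" "finite J" using assms by (auto intro: card_mono finite_subset)
    then have "card (insert u U) - card J = Suc (card U - card J)" using assms by simp
    then show "x ^ card J * y ^ (card (insert u U) - card J) * F J = y * (x ^ card J * y ^ (card U - card J) * F J)"
      by simp
  qed simp
  also have "(\<Sum>J\<in>insert u ` Pow U. x ^ card J * y ^ (card (insert u U) - card J) * F J)
      = x * Wt x y U (\<lambda>J. F (insert u J))"
    unfolding Wt_def sum_distrib_left sum.reindex[OF inj] o_def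
  proof (rule sum.cong)
    fix J assume J: "J \<in> Pow U"
    then have "finite J" "u \<notin> J" using assms by (auto intro: finite_subset)
    then have "card (insert u J) = Suc (card J)" by simp
    moreover have "card (insert u U) = Suc (card U)" using assms by simp
    ultimately show "x ^ card (insert u J) * y ^ (card (insert u U) - card (insert u J)) * F (insert u J) = x * (x ^ card J * y ^ (card U - card J) * F (insert u J))"
      by simp
  qed simp
  finally show ?thesis by simp
qed

lemma Wt_split:
  assumes "finite X1" "finite X2" "X1 \<inter> X2 = {}"
  shows "Wt x y (X1 \<union> X2) F = Wt x y X1 (\<lambda>E1. Wt x y X2 (\<lambda>E2. F (E1 \<union> E2)))"
  using assms
proof (induction X1 arbitrary: F rule: finite_induct)
  case empty
  then show ?case by simp
next
  case (insert z X1)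
  have "Wt x y (insert z X1 \<union> X2) F = Wt x y (insert z (X1 \<union> X2)) F" by simp
  also have "\<dots> = x * Wt x y (X1 \<union> X2) (\<lambda>J. F (insert z J)) + y * Wt x y (X1 \<union> X2) F"
    using insert by (intro Wt_insert) auto
  also have "\<dots> = x * Wt x y X1 (\<lambda>E1. Wt x y X2 (\<lambda>E2. F (insert z (E1 \<union> E2))))
     + y * Wt x y X1 (\<lambda>E1. Wt x y X2 (\<lambda>E2. F (E1 \<union> E2)))"
    using insert by simp
  also have "\<dots> = Wt x y (insert z X1) (\<lambda>E1. Wt x y X2 (\<lambda>E2. F (E1 \<union> E2)))"
    using insert by (subst Wt_insert) auto
  finally show ?case .
qed

lemma Wt_const:
  assumes "finite U"
  shows "Wt x y U (\<lambda>_. c) = c * (x + y) ^ card U"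
  using assms
  by (induction U rule: finite_induct) (simp_all add: Wt_insert algebra_simps)

lemma Wt_card:
  assumes "finite U"
  shows "Wt x y U (\<lambda>J. real (card J)) = real (card U) * x * (x + y) ^ (card U - 1)"
  using assms
proof (induction U rule: finite_induct)
  case empty
  then show ?case by simp
next
  case (insert u U)
  have "Wt x y (insert u U) (\<lambda>J. real (card J)) = x * Wt x y U (\<lambda>J. real (card (insert u J))) + y * Wt x y U (\<lambda>J. real (card J))"
    using insert by (simp add: Wt_insert)
  also have "Wt x y U (\<lambda>J. real (card (insert u J))) = Wt x y U (\<lambda>J. real (card J) + 1)"
    unfolding Wt_def
  proof (rule sum.cong)
    fix J assume "J \<in> Pow U"
    then have "finite J" "u \<notin> J" using insert by (auto intro: finite_subset)
    then show "x ^ card J * y ^ (card U - card J) * real (card (insert u J)) = x ^ card J * y ^ (card U - card J) * (real (card J) + 1)"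
      by simp
  qed simp
  also have "\<dots> = Wt x y U (\<lambda>J. real (card J)) + (x + y) ^ card U"
    using Wt_const[OF insert(1), of x y 1] unfolding Wt_def by (simp add: sum.distrib algebra_simps)
  finally show ?case using insert
    by (cases "card U") (simp_all add: algebra_simps)
qed

lemma Wt_mono:
  assumes "0 \<le> x" "0 \<le> y" "\<And>J. J \<subseteq> U \<Longrightarrow> F J \<le> G J"
  shows "Wt x y U F \<le> Wt x y U G"
  unfolding Wt_def using assms by (intro sum_mono mult_left_mono) auto

lemma Wt_cong:
  assumes "\<And>J. J \<subseteq> U \<Longrightarrow> F J = G J"
  shows "Wt x y U F = Wt x y U G"
  unfolding Wt_def using assms by (intro sum.cong) auto

lemma Wt_restrict:
  assumes "finite X" "Y \<subseteq> X" "x + y = 1"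
  shows "Wt x y X (\<lambda>E. F (E \<inter> Y)) = Wt x y Y F"
proof -
  have X: "X = Y \<union> (X - Y)" using assms by auto
  have "Wt x y X (\<lambda>E. F (E \<inter> Y)) = Wt x y Y (\<lambda>E1. Wt x y (X - Y) (\<lambda>E2. F ((E1 \<union> E2) \<inter> Y)))"
    using assms by (subst X, subst Wt_split) (auto intro: finite_subset)
  also have "\<dots> = Wt x y Y (\<lambda>E1. Wt x y (X - Y) (\<lambda>_. F E1))"
    by (intro Wt_cong, rule arg_cong[where f=F]) blast
  also have "\<dots> = Wt x y Y F"
    using assms by (simp add: Wt_const)
  finally show ?thesis .
qed

lemma Wt_image:
  assumes "finite U" "inj_on f U"
  shows "Wt x y (f ` U) G = Wt x y U (\<lambda>J. G (f ` J))"
  using assms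
proof (induction U arbitrary: G rule: finite_induct)
  case empty
  then show ?case by simp
next
  case (insert u U)
  have "f u \<notin> f ` U" using insert by auto
  then have "Wt x y (f ` insert u U) G = x * Wt x y (f ` U) (\<lambda>J. G (insert (f u) J)) + y * Wt x y (f ` U) G"
    using insert by (simp add: Wt_insert)
  also have "\<dots> = Wt x y (insert u U) (\<lambda>J. G (f ` J))"
    using insert by (simp add: Wt_insert)
  finally show ?case .
qed


lemma Wt_scale_pow:
  "Wt x y U (\<lambda>J. c ^ (card U - card J) * F J) = Wt x (y * c) U F"
  unfolding Wt_def by (intro sum.cong) (simp_all add: power_mult_distrib)

lemma Wt_lin:
  assumes "finite U"
  shows "Wt x y U (\<lambda>J. c + real (card J)) = c * (x + y) ^ card U + real (card U) * x * (x + y) ^ (card U - 1)"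
proof -
  have "Wt x y U (\<lambda>J. c + real (card J)) = Wt x y U (\<lambda>_. c) + Wt x y U (\<lambda>J. real (card J))"
    unfolding Wt_def by (simp add: sum.distrib algebra_simps)
  then show ?thesis using assms by (simp add: Wt_const Wt_card)
qed

definition Bnd :: "real \<Rightarrow> nat \<Rightarrow> nat \<Rightarrow> real" where
  "Bnd q m a = real a / real (m + a) * (1 - q ^ (m + a - 1)) ^ m"

lemma step_alg:
  assumes p: "0 \<le> p" and q: "0 \<le> q" and pq: "p + q = 1" and U: "finite U"
    and m: "card U = m" "m \<ge> 1" and a: "a \<ge> 1"
  shows "Bnd q m a \<le> Wt p q U (\<lambda>J. Bnd q (m - card J) (a - 1 + card J))"
proof -
  define N where "N = m + a - 1"
  have N1: "N \<ge> 1" using m a by (simp add: N_def)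
  define r where "r = 1 - q ^ (N - 1)"
  define s where "s = 1 - q ^ N"
  have srel: "p + q * r = s"
    using pq N1 unfolding r_def s_def
    by (cases N) (simp_all add: algebra_simps)
  have "Wt p q U (\<lambda>J. Bnd q (m - card J) (a - 1 + card J))
      = Wt p q U (\<lambda>J. r ^ (card U - card J) * ((real (a - 1) + real (card J)) / real N))"
  proof (rule Wt_cong)
    fix J assume "J \<subseteq> U"
    then have "card J \<le> m" using U m card_mono by blast
    then have e: "m - card J + (a - 1 + card J) = N" using a by (simp add: N_def)
    show "Bnd q (m - card J) (a - 1 + card J) = r ^ (card U - card J) * ((real (a - 1) + real (card J)) / real N)"
      unfolding Bnd_def e using m by (simp add: r_def)
  qed
  also have "\<dots> = Wt p (q * r) U (\<lambda>J. (real (a - 1) + real (card J)) / real N)"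
    by (rule Wt_scale_pow)
  also have "\<dots> = Wt p (q * r) U (\<lambda>J. real (a - 1) + real (card J)) / real N"
    unfolding Wt_def by (simp add: sum_divide_distrib)
  also have "\<dots> = (real (a - 1) * s ^ m + real m * p * s ^ (m - 1)) / real N"
    using Wt_lin[OF U] m srel by simp
  finally have eq: "Wt p q U (\<lambda>J. Bnd q (m - card J) (a - 1 + card J)) = (real (a - 1) * s ^ m + real m * p * s ^ (m - 1)) / real N" .
  have q1: "q \<le> 1" using p pq by simp
  have s0: "0 \<le> s" unfolding s_def using q q1 by (simp add: power_le_one)
  have bern: "1 - real N * p \<le> q ^ N"
    proof -
    have qq: "q = 1 - p" using pq by simp
    show ?thesis using Bernoulli_inequality[of "-p" N] p q unfolding qq by (simp add: algebra_simps)
  qed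
  have sN: "s \<le> real N * p" using bern unfolding s_def by simp
  define t where "t = s ^ (m - 1)"
  have t0: "0 \<le> t" unfolding t_def using s0 by simp
  have sm: "s ^ m = s * t" unfolding t_def using m by (cases m) simp_all
  have Nm: "real (m + a) = real N + 1" "real (a - 1) = real a - 1" "real N = real m + real a - 1"
    using a N1 by (simp_all add: N_def of_nat_diff)
  have key: "t * (real m * s) \<le> t * (real m * ((real N + 1) * p))"
    using t0 sN p by (intro mult_left_mono) (simp_all add: mult_left_mono algebra_simps)
  have "Bnd q m a = real a * s * t / (real N + 1)"
    unfolding Bnd_def using Nm sm by (simp add: s_def N_def)
  also have "\<dots> \<le> (real (a - 1) * s * t + real m * p * t) / real N"
  proof -
    have Npos: "real N > 0" using N1 by simp
    have key2: "t * (real m * s) \<le> t * (real m * ((real m + real a) * p))"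
      using key Nm(3) by simp
    have "real a * s * t * (real m + real a - 1) \<le> ((real a - 1) * s * t + real m * p * t) * (real m + real a)"
      using key2 by (simp add: algebra_simps)
    then have "real a * s * t * real N \<le> ((real a - 1) * s * t + real m * p * t) * (real N + 1)"
      using Nm(3) by simp
    then show ?thesis using Npos Nm(2)
      by (simp add: divide_simps)
  qed
  finally show ?thesis using eq sm unfolding t_def by (simp add: mult.assoc)
qed


definition XP :: "nat set \<Rightarrow> nat set \<Rightarrow> nat set set" where
  "XP A U = {e. e \<subseteq> A \<union> U \<and> card e = 2 \<and> e \<inter> U \<noteq> {}}"

definition Reach :: "nat set \<Rightarrow> nat set \<Rightarrow> nat set set \<Rightarrow> bool" where
  "Reach A U E = (\<forall>u\<in>U. \<exists>b\<in>A. (b, u) \<in> (edge_rel E)\<^sup>*)"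

lemma finite_XP: "finite A \<Longrightarrow> finite U \<Longrightarrow> finite (XP A U)"
  unfolding XP_def by (rule finite_subset[of _ "Pow (A \<union> U)"]) auto

lemma Wt_nonneg:
  assumes "0 \<le> x" "0 \<le> y" "finite U" "\<And>J. J \<subseteq> U \<Longrightarrow> 0 \<le> F J"
  shows "0 \<le> Wt x y U F"
  unfolding Wt_def using assms by (intro sum_nonneg mult_nonneg_nonneg) auto

lemma edge_rel_mono: "E \<subseteq> E' \<Longrightarrow> (edge_rel E)\<^sup>* \<subseteq> (edge_rel E')\<^sup>*"
  unfolding edge_rel_def by (intro rtrancl_mono) auto

lemma main_bound:
  assumes p: "0 \<le> p" and q: "0 \<le> q" and pq: "p + q = 1"
  shows "finite A \<Longrightarrow> finite U \<Longrightarrow> A \<inter> U = {} \<Longrightarrow>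
     Bnd q (card U) (card A) \<le> Wt p q (XP A U) (\<lambda>E. of_bool (Reach A U E))"
proof (induction "card A + card U" arbitrary: A U rule: less_induct)
  case less
  note finA = less.prems(1) and finU = less.prems(2) and disj = less.prems(3)
  have q1: "q \<le> 1" using p pq by simp
  show ?case
  proof (cases "U = {}")
    case True
    then have "Wt p q (XP A U) (\<lambda>E. of_bool (Reach A U E)) = 1"
      using finA finU pq by (simp add: Reach_def Wt_const finite_XP)
    moreover have "Bnd q (card U) (card A) \<le> 1"
      using True by (simp add: Bnd_def divide_le_eq_1)
    ultimately show ?thesis by simp
  next
    case Une: False
    show ?thesis
    proof (cases "A = {}")
      case True
      then have "Bnd q (card U) (card A) = 0" by (simp add: Bnd_def)
      then show ?thesis using p q finA finU by (simp add: Wt_nonneg finite_XP)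
    next
      case False
      then obtain a where aA: "a \<in> A" by blast
      have aU: "a \<notin> U" using aA disj by blast
      have cA1: "card A \<ge> 1" using aA finA by (metis One_nat_def Suc_leI card_gt_0_iff empty_iff)
      define f where "f = (\<lambda>u::nat. {a, u})"
      have injf: "inj_on f U" unfolding f_def inj_on_def using aU by (auto simp: doubleton_eq_iff)
      define Xa where "Xa = f ` U"
      define X' where "X' = XP A U - Xa"
      have XaX: "Xa \<subseteq> XP A U" unfolding Xa_def f_def XP_def using aA aU by (auto simp: card_insert_if)
      have Xsplit: "XP A U = Xa \<union> X'" unfolding X'_def using XaX by auto
      have finXa: "finite Xa" unfolding Xa_def using finU by simp
      have finX': "finite X'" unfolding X'_def using finite_XP[OF finA finU] by simp
      have eq1: "Wt p q (XP A U) (\<lambda>E. of_bool (Reach A U E))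
          = Wt p q Xa (\<lambda>E1. Wt p q X' (\<lambda>E2. of_bool (Reach A U (E1 \<union> E2))))"
        unfolding Xsplit using finXa finX' by (intro Wt_split) (auto simp: X'_def)
      have eq2: "Wt p q Xa (\<lambda>E1. Wt p q X' (\<lambda>E2. of_bool (Reach A U (E1 \<union> E2)))) = Wt p q U (\<lambda>J. Wt p q X' (\<lambda>E2. of_bool (Reach A U (f ` J \<union> E2))))"
        unfolding Xa_def using finU injf by (rule Wt_image)
      have le1: "Wt p q U (\<lambda>J. Bnd q (card U - card J) (card A - 1 + card J)) \<le> Wt p q U (\<lambda>J. Wt p q X' (\<lambda>E2. of_bool (Reach A U (f ` J \<union> E2))))"
      proof (rule Wt_mono[OF p q])
        fix J assume JU: "J \<subseteq> U"
        define A' where "A' = (A - {a}) \<union> J"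
        define U' where "U' = U - J"
        define Y where "Y = XP A' U'"
        have finJ: "finite J" using JU finU by (rule finite_subset)
        have finA': "finite A'" unfolding A'_def using finA finJ by simp
        have finU': "finite U'" unfolding U'_def using finU by simp
        have disj': "A' \<inter> U' = {}" unfolding A'_def U'_def using disj by auto
        have cA': "card A' = card A - 1 + card J"
        proof -
          have "card A' = card (A - {a}) + card J"
            unfolding A'_def using finA finJ disj JU by (intro card_Un_disjoint) auto
          then show ?thesis using aA finA by simp
        qed
        have cU': "card U' = card U - card J" unfolding U'_def using finJ JU by (simp add: card_Diff_subset)
        have lt: "card A' + card U' < card A + card U"
        proof -
          have "card J \<le> card U" using JU finU by (simp add: card_mono)
          moreover have "card A \<ge> 1" using aA finA by (metis One_nat_def Suc_leI card_gt_0_iff empty_iff)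
          ultimately show ?thesis using cA' cU' by simp
        qed
        have YX': "Y \<subseteq> X'"
        proof
          fix e assume "e \<in> Y"
          then have e: "e \<subseteq> A' \<union> U'" "card e = 2" "e \<inter> U' \<noteq> {}" unfolding Y_def XP_def by auto
          have "a \<notin> e" using e(1) aU JU unfolding A'_def U'_def by auto
          moreover have "e \<in> XP A U" using e JU unfolding XP_def A'_def U'_def by auto
          ultimately show "e \<in> X'" unfolding X'_def Xa_def f_def by auto
        qed
        have imp: "Reach A U (f ` J \<union> E2)" if R: "Reach A' U' (E2 \<inter> Y)" for E2
          unfolding Reach_def
        proof
          fix u assume uU: "u \<in> U"
          have edge: "(a, v) \<in> (edge_rel (f ` J \<union> E2))\<^sup>*" if "v \<in> J" for v
            using that unfolding edge_rel_def f_def by auto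
          show "\<exists>b\<in>A. (b, u) \<in> (edge_rel (f ` J \<union> E2))\<^sup>*"
          proof (cases "u \<in> J")
            case True
            then show ?thesis using edge aA by blast
          next
            case False
            then have "u \<in> U'" using uU unfolding U'_def by auto
            then obtain b where bA': "b \<in> A'" and bu: "(b, u) \<in> (edge_rel (E2 \<inter> Y))\<^sup>*"
              using R unfolding Reach_def by blast
            have bu': "(b, u) \<in> (edge_rel (f ` J \<union> E2))\<^sup>*"
              using bu edge_rel_mono[of "E2 \<inter> Y" "f ` J \<union> E2"] by blast
            show ?thesis
            proof (cases "b \<in> J")
              case True
              then have "(a, u) \<in> (edge_rel (f ` J \<union> E2))\<^sup>*" using edge bu' by (meson rtrancl_trans)
              then show ?thesis using aA by blast
            next
              case False
              then have "b \<in> A" using bA' unfolding A'_def by auto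
              then show ?thesis using bu' by blast
            qed
          qed
        qed
        have "Bnd q (card U - card J) (card A - 1 + card J) = Bnd q (card U') (card A')"
          using cA' cU' by simp
        also have "\<dots> \<le> Wt p q Y (\<lambda>E. of_bool (Reach A' U' E))"
          unfolding Y_def by (rule less.hyps[OF lt finA' finU' disj'])
        also have "\<dots> = Wt p q X' (\<lambda>E. of_bool (Reach A' U' (E \<inter> Y)))"
          using finX' YX' pq by (intro Wt_restrict[symmetric])
        also have "\<dots> \<le> Wt p q X' (\<lambda>E2. of_bool (Reach A U (f ` J \<union> E2)))"
          using imp by (intro Wt_mono[OF p q]) auto
        finally show "Bnd q (card U - card J) (card A - 1 + card J) \<le> Wt p q X' (\<lambda>E2. of_bool (Reach A U (f ` J \<union> E2)))" .
      qed
      have le2: "Wt p q U (\<lambda>J. Bnd q (card U - card J) (card A - 1 + card J)) \<ge> Bnd q (card U) (card A)"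
        using Une finU cA1 by (intro step_alg[OF p q pq finU refl])
           (auto simp: Suc_leI card_gt_0_iff)
      show ?thesis using eq1 eq2 le1 le2 by linarith
    qed
  qed
qed


lemma gnp_Wt:
  assumes "finite X"
  shows "(\<Sum>E\<in>{E. E \<subseteq> X \<and> Q E}. p ^ card E * (1 - p) ^ (card X - card E))
       = Wt p (1 - p) X (\<lambda>E. of_bool (Q E))"
proof -
  have se: "{E. E \<subseteq> X \<and> Q E} = {E \<in> Pow X. Q E}" by auto
  have fP: "finite (Pow X)" using assms by simp
  show ?thesis unfolding se sum.inter_filter[OF fP] Wt_def
    by (intro sum.cong) auto
qed

lemma edge_rel_sym: "(x, y) \<in> (edge_rel E)\<^sup>* \<Longrightarrow> (y, x) \<in> (edge_rel E)\<^sup>*"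
proof (induction rule: rtrancl_induct)
  case base
  then show ?case by simp
next
  case (step y z)
  then have "(z, y) \<in> edge_rel E" unfolding edge_rel_def by (simp add: insert_commute)
  then show ?case using step.IH by (meson converse_rtrancl_into_rtrancl)
qed

theorem lemma3p4:
  fixes \<alpha> :: real and n :: nat
  assumes "\<alpha> \<ge> 0" and "n \<ge> 2" and "real n \<ge> \<alpha>"
  shows "gnp_prob n (\<alpha> / real n) (graph_connected n)
           \<ge> (1 / real n) * (1 - (1 - \<alpha> / real n) ^ (n - 1)) ^ (n - 1)"
proof -
  define p where "p = \<alpha> / real n"
  define q where "q = 1 - p"
  have npos: "real n > 0" using assms by simp
  have p0: "0 \<le> p" unfolding p_def using assms by simp
  have p1: "p \<le> 1" unfolding p_def using assms npos by (simp add: divide_le_eq_1)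
  have q0: "0 \<le> q" unfolding q_def using p1 by simp
  have pq: "p + q = 1" unfolding q_def by simp
  have XP_eq: "XP {1} {2..n} = all_pairs n"
  proof
    show "XP {1} {2..n} \<subseteq> all_pairs n" unfolding XP_def all_pairs_def by auto
  next
    show "all_pairs n \<subseteq> XP {1} {2..n}"
    proof
      fix e assume "e \<in> all_pairs n"
      then have e: "e \<subseteq> {1..n}" "card e = 2" unfolding all_pairs_def by auto
      have "e \<inter> {2..n} \<noteq> {}"
      proof
        assume "e \<inter> {2..n} = {}"
        then have "e \<subseteq> {1}"
        proof (intro subsetI)
          fix x assume ee: "e \<inter> {2..n} = {}" and "x \<in> e"
          then have "1 \<le> x" "x \<le> n" "\<not> (2 \<le> x \<and> x \<le> n)" using e(1) by auto
          then show "x \<in> {1}" by simp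
        qed
        then have "card e \<le> card {1::nat}" by (intro card_mono) auto
        then show False using e(2) by simp
      qed
      moreover have "{1::nat} \<union> {2..n} = {1..n}" using assms by auto
      ultimately show "e \<in> XP {1} {2..n}" unfolding XP_def using e by auto
    qed
  qed
  have cU: "card {2..n} = n - 1" by simp
  have B: "Bnd q (n - 1) 1 \<le> Wt p q (XP {1} {2..n}) (\<lambda>E. of_bool (Reach {1} {2..n} E))"
    using main_bound[OF p0 q0 pq, of "{1}" "{2..n}"] cU by simp
  have Bv: "Bnd q (n - 1) 1 = (1 / real n) * (1 - q ^ (n - 1)) ^ (n - 1)"
    unfolding Bnd_def using assms by simp
  have mono: "Wt p q (all_pairs n) (\<lambda>E. of_bool (Reach {1} {2..n} E))
      \<le> Wt p q (all_pairs n) (\<lambda>E. of_bool (graph_connected n E))"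
  proof (rule Wt_mono[OF p0 q0])
    fix E
    have "graph_connected n E" if R: "Reach {1} {2..n} E"
    proof -
      have r1: "(1, u) \<in> (edge_rel E)\<^sup>*" if "u \<in> {1..n}" for u
      proof (cases "u = 1")
        case True then show ?thesis by simp
      next
        case False then have "u \<in> {2..n}" using that by auto
        then show ?thesis using R unfolding Reach_def by auto
      qed
      show ?thesis unfolding graph_connected_def
        using r1 edge_rel_sym by (meson rtrancl_trans)
    qed
    then show "of_bool (Reach {1} {2..n} E) \<le> (of_bool (graph_connected n E) :: real)"
      by auto
  qed
  have fin: "finite (all_pairs n)" unfolding all_pairs_def
    by (rule finite_subset[of _ "Pow {1..n}"]) auto
  have G: "gnp_prob n p (graph_connected n) = Wt p q (all_pairs n) (\<lambda>E. of_bool (graph_connected n E))"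
    unfolding gnp_prob_def q_def by (rule gnp_Wt[OF fin])
  have "(1 / real n) * (1 - q ^ (n - 1)) ^ (n - 1) \<le> gnp_prob n p (graph_connected n)"
    using B[unfolded XP_eq] Bv mono G by linarith
  then show ?thesis unfolding q_def p_def .
qed

end
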